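(* There are absolute constants $c,C>0$ such that the following holds. Let $a$ be a symmetric, sub-gaussian random variable with $\mathbb{E}a^2=1$, let $\mathbf{a}$ be a random vector in $\mathbb{R}^n$ with i.i.d. coordinates distributed as $a$, let $\mathbf{x}\in S^{n-1}$, and define $\mathbf{v}_{\mathbf{x}}=\mathbb{E}\,\mathrm{sign}(\langle\mathbf{a},\mathbf{x}\rangle)\mathbf{a}$. If $\|\mathbf{x}\|_\infty\le c/\mathbb{E}|a|^3$, then $\|\mathbf{v}_{\mathbf{x}}\|_\infty\le C\,\mathbb{E}|a|^3\|\mathbf{x}\|_\infty$.
   Context: $\mathrm{sign}(t)=1$ if $t\ge0$ and $-1$ otherwise. $S^{n-1}$ is the Euclidean unit sphere in $\mathbb{R}^n$. *)

theory Defs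
  imports "HOL-Probability.Probability"
begin

definition sgn0 :: "real \<Rightarrow> real" where
  "sgn0 t = (if t \<ge> 0 then 1 else -1)"

definition symmetric_distr :: "real measure \<Rightarrow> bool" where
  "symmetric_distr \<mu> \<longleftrightarrow> distr \<mu> borel uminus = \<mu>"

definition subgaussian_distr :: "real measure \<Rightarrow> bool" where
  "subgaussian_distr \<mu> \<longleftrightarrow>
     (\<exists>K>0. \<forall>t\<ge>0. measure \<mu> {s. \<bar>s\<bar> > t} \<le> 2 * exp (- (t\<^sup>2 / K\<^sup>2)))"

definition sup_norm :: "nat \<Rightarrow> (nat \<Rightarrow> real) \<Rightarrow> real" where
  "sup_norm n x = Max ((\<lambda>i. \<bar>x i\<bar>) ` {..<n})"

definition v_vec :: "real measure \<Rightarrow> nat \<Rightarrow> (nat \<Rightarrow> real) \<Rightarrow> nat \<Rightarrow> real" where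
  "v_vec \<mu> n x i = (\<integral>\<omega>. sgn0 (\<Sum>j<n. \<omega> j * x j) * \<omega> i \<partial>(PiM {..<n} (\<lambda>_. \<mu>)))"

end

theory Submission
  imports Defs
begin

lemma cos_half: fixes z :: real assumes "\<bar>z\<bar> \<le> 1" shows "cos z \<ge> 1/2"
proof -
  have "cos (pi/3) \<le> cos \<bar>z\<bar>"
    using assms pi_gt3 by (intro cos_monotone_0_pi_le) auto
  then show ?thesis by (simp add: cos_60)
qed

lemma intble_Icc:
  fixes f :: "real \<Rightarrow> real"
  shows "continuous_on {a..b} f \<Longrightarrow> integrable lborel (\<lambda>x. indicator {a..b} x *\<^sub>R f x)"
  using borel_integrable_atLeastAtMost'[of a b f] by (simp add: set_integrable_def)

definition fk :: "real \<Rightarrow> real \<Rightarrow> real" where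
  "fk T y = (\<integral>u. indicator {0..T} u *\<^sub>R ((1 - u/T) * cos (u*y)) \<partial>lborel)"

lemma fk_closed:
  assumes T: "T > 0" and y: "y \<noteq> 0"
  shows "fk T y = (1 - cos (T*y)) / (T * y\<^sup>2)"
proof -
  let ?F = "\<lambda>u. (1 - u/T) * sin (u*y) / y - cos (u*y) / (T * y\<^sup>2)"
  have "fk T y = ?F T - ?F 0"
    unfolding fk_def
  proof (rule integral_FTC_atLeastAtMost)
    show "0 \<le> T" using T by simp
    fix u assume "0 \<le> u" "u \<le> T"
    show "(?F has_vector_derivative (1 - u/T) * cos (u*y)) (at u within {0..T})"
      unfolding has_real_derivative_iff_has_vector_derivative[symmetric]
      using T y
      by (auto intro!: derivative_eq_intros simp: field_simps power2_eq_square)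
  qed (use T in \<open>auto intro!: continuous_intros\<close>)
  then show ?thesis using T y by (simp add: field_simps power2_eq_square)
qed

lemma fk_nonneg:
  assumes T: "T > 0" shows "fk T y \<ge> 0"
proof (cases "y = 0")
  case True
  then show ?thesis unfolding fk_def using T
    by (intro integral_nonneg_AE) (auto simp: indicator_def)
next
  case False
  then show ?thesis using T by (simp add: fk_closed)
qed

lemma fk_lower:
  assumes T: "T > 0" and y: "\<bar>y\<bar> \<le> 1/T" shows "fk T y \<ge> T/4"
proof -
  let ?F = "\<lambda>u. (u - u\<^sup>2/(2*T)) / 2"
  have 1: "(\<integral>u. indicator {0..T} u *\<^sub>R ((1 - u/T) / 2) \<partial>lborel) = ?F T - ?F 0"
  proof (rule integral_FTC_atLeastAtMost)
    show "0 \<le> T" using T by simp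
    fix u assume "0 \<le> u" "u \<le> T"
    show "(?F has_vector_derivative (1 - u/T) / 2) (at u within {0..T})"
      unfolding has_real_derivative_iff_has_vector_derivative[symmetric]
      using T
      by (auto intro!: derivative_eq_intros simp: field_simps power2_eq_square)
  qed (use T in \<open>auto intro!: continuous_intros\<close>)
  have "?F T - ?F 0 = T/4" using T by (simp add: field_simps power2_eq_square)
  moreover have "(\<integral>u. indicator {0..T} u *\<^sub>R ((1 - u/T) / 2) \<partial>lborel) \<le> fk T y"
    unfolding fk_def
  proof (rule integral_mono)
    show "integrable lborel (\<lambda>u. indicator {0..T} u *\<^sub>R ((1 - u/T) / 2))"
      using T by (intro intble_Icc continuous_intros) auto
    show "integrable lborel (\<lambda>u. indicator {0..T} u *\<^sub>R ((1 - u/T) * cos (u*y)))"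
      using T by (intro intble_Icc continuous_intros) auto
    fix u
    show "indicator {0..T} u *\<^sub>R ((1 - u/T) / 2) \<le> indicator {0..T} u *\<^sub>R ((1 - u/T) * cos (u*y))"
    proof (cases "u \<in> {0..T}")
      case True
      then have "\<bar>u*y\<bar> \<le> 1" using T y
      proof -
        have "\<bar>u*y\<bar> = u * \<bar>y\<bar>" using True by (simp add: abs_mult)
        also have "\<dots> \<le> T * \<bar>y\<bar>" using True by (intro mult_right_mono) auto
        also have "\<dots> \<le> 1" using T y by (simp add: field_simps)
        finally show ?thesis .
      qed
      then have "cos (u*y) \<ge> 1/2" by (rule cos_half)
      moreover have "1 - u/T \<ge> 0" using True T by (auto simp: field_simps)
      ultimately have "(1 - u/T) * (1/2) \<le> (1 - u/T) * cos (u*y)" by (intro mult_left_mono)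
      then show ?thesis using True by simp
    qed simp
  qed
  ultimately show ?thesis using 1 by linarith
qed

lemma fk_eq: assumes T: "T > 0"
  shows "fk T y = (if y = 0 then T/2 else (1 - cos (T*y)) / (T * y\<^sup>2))"
proof (cases "y = 0")
  case True
  let ?F = "\<lambda>u. u - u\<^sup>2/(2*T)"
  have "fk T y = ?F T - ?F 0"
    unfolding fk_def True mult_zero_right cos_zero mult_1_right
  proof (rule integral_FTC_atLeastAtMost)
    show "0 \<le> T" using T by simp
    fix u assume "0 \<le> u" "u \<le> T"
    show "(?F has_vector_derivative (1 - u/T)) (at u within {0..T})"
      unfolding has_real_derivative_iff_has_vector_derivative[symmetric]
      using T
      by (auto intro!: derivative_eq_intros simp: field_simps power2_eq_square)
  qed (use T in \<open>auto intro!: continuous_intros\<close>)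
  then show ?thesis using True T by (simp add: field_simps power2_eq_square)
qed (use T fk_closed in auto)

lemma fk_measurable[measurable]: "T > 0 \<Longrightarrow> fk T \<in> borel_measurable borel"
proof -
  assume T: "T > 0"
  have "fk T = (\<lambda>y. if y = 0 then T/2 else (1 - cos (T*y)) / (T * y\<^sup>2))"
    by (rule ext) (simp add: fk_eq[OF T])
  then show ?thesis by simp
qed

lemma esseen:
  assumes P: "prob_space P" and Y[measurable]: "Y \<in> borel_measurable P" and T: "T > 0"
    and bnd: "\<And>u. 0 \<le> u \<Longrightarrow> u \<le> T \<Longrightarrow> cmod (\<integral>\<omega>. iexp (u * Y \<omega>) \<partial>P) \<le> exp (-(u\<^sup>2)/6)"
  shows "measure P {\<omega>\<in>space P. \<bar>Y \<omega>\<bar> \<le> 1/T} \<le> 4 * exp (3/2) / T"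
proof -
  interpret P: prob_space P by fact
  define N where "N = density lborel (\<lambda>u. indicator {0..T} u :: real)"
  have sN[measurable_cong]: "sets N = sets borel" by (simp add: N_def)
  have spN: "space N = UNIV" by (simp add: N_def)
  interpret N: finite_measure N
  proof (rule finite_measureI)
    have "emeasure N (space N) = (\<integral>\<^sup>+x\<in>UNIV. ennreal (indicator {0..T} x)\<partial>lborel)"
      unfolding N_def by (subst emeasure_density) auto
    also have "\<dots> = emeasure lborel {0..T}"
      unfolding ennreal_indicator by simp
    finally show "emeasure N (space N) \<noteq> \<infinity>" using T by simp
  qed
  have intN: "integral\<^sup>L N g = (\<integral>u. indicator {0..T} u *\<^sub>R g u \<partial>lborel)"
    if [measurable]: "g \<in> borel_measurable borel" for g :: "real \<Rightarrow> real"
    unfolding N_def by (subst integral_density) auto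
  interpret NP: pair_sigma_finite N P ..
  interpret NPf: finite_measure "N \<Otimes>\<^sub>M P"
    by (rule finite_measure_pair_measure) unfold_locales
  define f where "f u \<omega> = indicator {0..T} u * ((1 - u/T) * cos (u * Y \<omega>))" for u \<omega>
  have fm[measurable]: "case_prod f \<in> borel_measurable (N \<Otimes>\<^sub>M P)"
    unfolding f_def by measurable
  have fint: "integrable (N \<Otimes>\<^sub>M P) (case_prod f)"
  proof (rule NPf.integrable_const_bound[where B=1])
    show "AE x in N \<Otimes>\<^sub>M P. norm (case_prod f x) \<le> 1"
    proof (rule AE_I2)
      fix x assume "x \<in> space (N \<Otimes>\<^sub>M P)"
      show "norm (case_prod f x) \<le> 1"
      proof (cases "fst x \<in> {0..T}")
        case True
        then have "\<bar>1 - fst x/T\<bar> \<le> 1" using T by (auto simp: field_simps)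
        moreover have "\<bar>cos (fst x * Y (snd x))\<bar> \<le> 1" by simp
        ultimately have "\<bar>1 - fst x/T\<bar> * \<bar>cos (fst x * Y (snd x))\<bar> \<le> 1"
          by (intro mult_le_one) auto
        then show ?thesis
          using True unfolding f_def by (auto simp: abs_mult split: prod.splits)
      qed (auto simp: f_def split: prod.splits)
    qed
  qed fact
  have fkY: "fk T (Y \<omega>) = (\<integral>u. f u \<omega> \<partial>N)" for \<omega>
  proof -
    have "(\<integral>u. f u \<omega> \<partial>N) = (\<integral>u. indicator {0..T} u *\<^sub>R f u \<omega> \<partial>lborel)"
      by (rule intN) (simp add: f_def)
    also have "\<dots> = fk T (Y \<omega>)"
      unfolding fk_def f_def by (rule Bochner_Integration.integral_cong) (auto split: split_indicator)
    finally show ?thesis ..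
  qed
  have intfk: "integrable P (\<lambda>\<omega>. fk T (Y \<omega>))"
    unfolding fkY using NP.integrable_snd[OF fint] .
  have "(\<integral>\<omega>. fk T (Y \<omega>) \<partial>P) = (\<integral>u. (\<integral>\<omega>. f u \<omega> \<partial>P) \<partial>N)"
    unfolding fkY by (rule NP.Fubini_integral[OF fint])
  also have "\<dots> \<le> (\<integral>u. exp (3/2) * exp (-u) \<partial>N)"
  proof (rule integral_mono)
    show "integrable N (\<lambda>u. \<integral>\<omega>. f u \<omega> \<partial>P)"
      using NP.integrable_fst[OF fint] .
    show "integrable N (\<lambda>u. exp (3/2) * exp (-u))"
      proof -
        have c: "continuous_on {0..T} (\<lambda>x::real. exp (3/2) * exp (-x))" by (intro continuous_intros)
        show ?thesis unfolding N_def by (subst integrable_density) (use intble_Icc[OF c] in auto)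
      qed
    fix u assume u: "u \<in> space N"
    show "(\<integral>\<omega>. f u \<omega> \<partial>P) \<le> exp (3/2) * exp (-u)"
    proof (cases "u \<in> {0..T}")
      case False then show ?thesis by (simp add: f_def)
    next
      case True
      then have u0: "0 \<le> u" "u \<le> T" by auto
      have ci: "integrable P (\<lambda>\<omega>. iexp (u * Y \<omega>))"
        by (rule P.integrable_iexp) auto
      have e1: "(\<integral>\<omega>. f u \<omega> \<partial>P) = (1 - u/T) * (\<integral>\<omega>. cos (u * Y \<omega>) \<partial>P)"
        unfolding f_def using True by simp
      have "(\<integral>\<omega>. cos (u * Y \<omega>) \<partial>P) = Re (\<integral>\<omega>. iexp (u * Y \<omega>) \<partial>P)"
        using integral_Re[OF ci] by (simp add: Re_exp)
      also have "\<dots> \<le> exp (-(u\<^sup>2)/6)"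
        using complex_Re_le_cmod bnd[OF u0] order.trans by blast
      also have "exp (-(u\<^sup>2)/6) \<le> exp (3/2) * exp (-u)"
      proof -
        have "-(u\<^sup>2)/6 \<le> 3/2 + -u"
          using sum_power2_ge_zero[of "u - 3" 0] by (simp add: power2_eq_square field_simps)
        then show ?thesis by (simp add: exp_add[symmetric])
      qed
      finally have e2: "(\<integral>\<omega>. cos (u * Y \<omega>) \<partial>P) \<le> exp (3/2) * exp (-u)" .
      have w: "0 \<le> 1 - u/T" "1 - u/T \<le> 1" using u0 T by (auto simp: field_simps)
      have "(1 - u/T) * (\<integral>\<omega>. cos (u * Y \<omega>) \<partial>P) \<le> (1 - u/T) * (exp (3/2) * exp (-u))"
        using w e2 by (intro mult_left_mono) auto
      also have "\<dots> \<le> exp (3/2) * exp (-u)"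
        using w by (intro mult_left_le_one_le) auto
      finally show ?thesis using e1 by simp
    qed
  qed
  also have "(\<integral>u. exp (3/2) * exp (-u) \<partial>N) = exp (3/2) * (1 - exp (-T))"
  proof -
    have "(\<integral>u. exp (3/2) * exp (-u) \<partial>N) = (\<integral>u. indicator {0..T} u *\<^sub>R (exp (3/2) * exp (-u)) \<partial>lborel)"
      by (subst intN) auto
    also have "\<dots> = (- exp (3/2) * exp (-T)) - (- exp (3/2) * exp (-0))"
    proof (rule integral_FTC_atLeastAtMost)
      show "0 \<le> T" using T by simp
      fix u assume "0 \<le> u" "u \<le> T"
      show "((\<lambda>u. - exp (3/2) * exp (-u)) has_vector_derivative (exp (3/2) * exp (-u))) (at u within {0..T})"
        unfolding has_real_derivative_iff_has_vector_derivative[symmetric]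
        by (auto intro!: derivative_eq_intros)
    qed (auto intro!: continuous_intros)
    finally show ?thesis by (simp add: algebra_simps)
  qed
  also have "\<dots> \<le> exp (3/2)" by simp
  finally have up: "(\<integral>\<omega>. fk T (Y \<omega>) \<partial>P) \<le> exp (3/2)" .
  have "measure P {\<omega>\<in>space P. \<bar>Y \<omega>\<bar> \<le> 1/T} * (T/4) = (\<integral>\<omega>. indicator {\<omega>\<in>space P. \<bar>Y \<omega>\<bar> \<le> 1/T} \<omega> * (T/4) \<partial>P)"
    by simp
  also have "\<dots> \<le> (\<integral>\<omega>. fk T (Y \<omega>) \<partial>P)"
  proof (rule integral_mono[OF _ intfk])
    show "integrable P (\<lambda>\<omega>. indicator {\<omega>\<in>space P. \<bar>Y \<omega>\<bar> \<le> 1/T} \<omega> * (T/4))"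
      by (intro integrable_mult_left integrable_real_indicator) (auto simp: P.emeasure_finite less_top[symmetric])
    fix \<omega> show "indicator {\<omega>\<in>space P. \<bar>Y \<omega>\<bar> \<le> 1/T} \<omega> * (T/4) \<le> fk T (Y \<omega>)"
      using fk_lower[OF T, of "Y \<omega>"] fk_nonneg[OF T, of "Y \<omega>"] by (auto simp: indicator_def)
  qed
  finally show ?thesis using up T by (simp add: field_simps)
qed

locale setting =
  fixes \<mu> :: "real measure"
  assumes rd: "real_distribution \<mu>"
    and i2: "integrable \<mu> (\<lambda>t. t\<^sup>2)" and e2: "(\<integral>t. t\<^sup>2 \<partial>\<mu>) = 1"
    and e1: "(\<integral>t. t \<partial>\<mu>) = 0"
    and i3: "integrable \<mu> (\<lambda>t. \<bar>t\<bar> ^ 3)"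
begin

interpretation M: real_distribution \<mu> by (rule rd)

definition "M3 = (\<integral>t. \<bar>t\<bar> ^ 3 \<partial>\<mu>)"

lemma pU: "M.prob UNIV = 1" using M.prob_space M.space_eq_univ by simp

lemma i1: "integrable \<mu> (\<lambda>t. t)"
proof (rule Bochner_Integration.integrable_bound[where f="\<lambda>t. 1 + t\<^sup>2"])
  show "integrable \<mu> (\<lambda>t. 1 + t\<^sup>2)" using i2 by (intro Bochner_Integration.integrable_add) auto
  show "AE x in \<mu>. norm x \<le> norm (1 + x\<^sup>2)"
  proof (rule AE_I2)
    fix x :: real
    have "\<bar>x\<bar> \<le> 1 + x\<^sup>2"
      using sum_power2_ge_zero[of "\<bar>x\<bar> - 1" 0] by (simp add: power2_eq_square field_simps)
    then show "norm x \<le> norm (1 + x\<^sup>2)" by simp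
  qed
qed simp

lemma ia: "integrable \<mu> (\<lambda>t. \<bar>t\<bar>)"
  using i1 by simp

lemma Ea: "(\<integral>t. \<bar>t\<bar> \<partial>\<mu>) \<le> 1"
proof -
  have "(\<integral>t. \<bar>t\<bar> \<partial>\<mu>) \<le> (\<integral>t. (1 + t\<^sup>2)/2 \<partial>\<mu>)"
  proof (rule integral_mono[OF ia])
    show "integrable \<mu> (\<lambda>t. (1 + t\<^sup>2)/2)" using i2 by auto
    fix t :: real show "\<bar>t\<bar> \<le> (1 + t\<^sup>2)/2"
      using sum_power2_ge_zero[of "\<bar>t\<bar> - 1" 0] by (simp add: power2_eq_square field_simps)
  qed
  also have "\<dots> = 1" using i2 e2 pU by simp
  finally show ?thesis .
qed

lemma M3_ge1: "M3 \<ge> 1"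
proof -
  have "1 = (\<integral>t. t\<^sup>2 \<partial>\<mu>)" using e2 by simp
  also have "\<dots> \<le> (\<integral>t. (\<bar>t\<bar> + \<bar>t\<bar>^3)/2 \<partial>\<mu>)"
  proof (rule integral_mono[OF i2])
    show "integrable \<mu> (\<lambda>t. (\<bar>t\<bar> + \<bar>t\<bar>^3)/2)" using ia i3 by auto
    fix t :: real
    have "0 \<le> \<bar>t\<bar> * (\<bar>t\<bar> - 1)\<^sup>2" by simp
    then show "t\<^sup>2 \<le> (\<bar>t\<bar> + \<bar>t\<bar>^3)/2"
      by (simp add: power2_eq_square power3_eq_cube algebra_simps)
  qed
  also have "\<dots> = ((\<integral>t. \<bar>t\<bar> \<partial>\<mu>) + M3)/2" using ia i3 by (simp add: M3_def)
  finally show ?thesis using Ea by simp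
qed

lemma char_bound:
  assumes s: "\<bar>s\<bar> * M3 \<le> 1"
  shows "cmod (char \<mu> s) \<le> exp (-(s\<^sup>2)/3)"
proof -
  have var: "M.variance (\<lambda>x. x) = 1" using e1 e2 by simp
  have ca: "cmod (char \<mu> s - (1 - s^2 * 1 / 2)) \<le>
    (s^2 / 6) * M.expectation (\<lambda>x. min (6 * x^2) (\<bar>s\<bar> * \<bar>x\<bar>^3))"
    by (rule M.char_approx3[OF i1 e1 i2 var])
  have "M.expectation (\<lambda>x. min (6 * x^2) (\<bar>s\<bar> * \<bar>x\<bar>^3)) \<le> M.expectation (\<lambda>x. \<bar>s\<bar> * \<bar>x\<bar>^3)"
    by (rule integral_mono) (use i2 i3 in \<open>auto intro!: integrable_min\<close>)
  also have "\<dots> = \<bar>s\<bar> * M3" by (simp add: M3_def)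
  finally have ex: "M.expectation (\<lambda>x. min (6 * x^2) (\<bar>s\<bar> * \<bar>x\<bar>^3)) \<le> 1" using s by simp
  have s1: "\<bar>s\<bar> \<le> 1" using s M3_ge1
    by (metis abs_ge_zero dual_order.trans mult_le_cancel_left1 mult.commute not_le)
  then have s2: "s\<^sup>2 \<le> 1" by (metis abs_le_square_iff abs_one one_power2)
  have "cmod (char \<mu> s) \<le> cmod (char \<mu> s - (1 - s^2 * 1 / 2)) + cmod (complex_of_real (1 - s^2 * 1 / 2))"
    by (metis norm_triangle_ineq2 diff_add_cancel norm_triangle_ineq)
  also have "\<dots> \<le> s\<^sup>2/6 + (1 - s\<^sup>2/2)"
  proof -
    have "(s^2 / 6) * M.expectation (\<lambda>x. min (6 * x^2) (\<bar>s\<bar> * \<bar>x\<bar>^3)) \<le> s\<^sup>2/6"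
      using ex by (intro mult_left_le) auto
    moreover have "cmod (complex_of_real (1 - s^2 * 1 / 2)) = 1 - s\<^sup>2/2" unfolding norm_of_real using s2 by simp
    ultimately show ?thesis using ca by linarith
  qed
  also have "\<dots> = 1 + (-(s\<^sup>2)/3)" by simp
  also have "\<dots> \<le> exp (-(s\<^sup>2)/3)" by (rule exp_ge_add_one_self)
  finally show ?thesis .
qed

lemma char_prod:
  assumes J: "finite J"
  shows "(\<integral>\<omega>. iexp (u * (\<Sum>j\<in>J. \<omega> j * x j)) \<partial>PiM J (\<lambda>_. \<mu>)) = (\<Prod>j\<in>J. char \<mu> (u * x j))"
proof -
  interpret PP: product_prob_space "\<lambda>_. \<mu>" by unfold_locales
  have "(\<integral>\<omega>. iexp (u * (\<Sum>j\<in>J. \<omega> j * x j)) \<partial>PiM J (\<lambda>_. \<mu>))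
      = (\<integral>\<omega>. (\<Prod>j\<in>J. iexp ((u * x j) * \<omega> j)) \<partial>PiM J (\<lambda>_. \<mu>))"
  proof (rule Bochner_Integration.integral_cong[OF refl])
    fix \<omega>
    have "\<i> * complex_of_real (u * (\<Sum>j\<in>J. \<omega> j * x j)) = (\<Sum>j\<in>J. \<i> * complex_of_real ((u * x j) * \<omega> j))"
      by (simp add: sum_distrib_left mult_ac)
    then show "iexp (u * (\<Sum>j\<in>J. \<omega> j * x j)) = (\<Prod>j\<in>J. iexp ((u * x j) * \<omega> j))"
      by (simp add: exp_sum J)
  qed
  also have "\<dots> = (\<Prod>j\<in>J. char \<mu> (u * x j))"
    unfolding char_def
    by (rule PP.product_integral_prod[OF J]) (rule M.integrable_iexp, auto)
  finally show ?thesis .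
qed

lemma sets_mu[measurable_cong]: "sets \<mu> = sets borel" by (rule M.events_eq_borel)

lemma R_meas[measurable]: "(\<lambda>\<omega>. \<Sum>j\<in>J. \<omega> j * x j) \<in> borel_measurable (PiM J (\<lambda>_. \<mu>))"
  by measurable

lemma anti:
  assumes J: "finite J" and m: "m > 0" and xm: "\<And>j. j \<in> J \<Longrightarrow> \<bar>x j\<bar> \<le> m"
    and xs: "(\<Sum>j\<in>J. (x j)\<^sup>2) \<ge> 1/2" and s: "s \<ge> 0"
  shows "measure (PiM J (\<lambda>_. \<mu>)) {\<omega>\<in>space (PiM J (\<lambda>_. \<mu>)). \<bar>\<Sum>j\<in>J. \<omega> j * x j\<bar> \<le> s}
         \<le> 4 * exp (3/2) * (s + M3 * m)"
proof -
  interpret PP: product_prob_space "\<lambda>_. \<mu>" by unfold_locales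
  interpret P: prob_space "PiM J (\<lambda>_. \<mu>)" using rd by (auto intro!: prob_space_PiM simp: real_distribution_def)
  define h where "h = max s (M3 * m)"
  have hpos: "h > 0" using M3_ge1 m by (auto simp: h_def less_max_iff_disj)
  define T where "T = 1 / h"
  have T: "T > 0" using hpos by (simp add: T_def)
  have bnd: "cmod (\<integral>\<omega>. iexp (u * (\<Sum>j\<in>J. \<omega> j * x j)) \<partial>PiM J (\<lambda>_. \<mu>)) \<le> exp (-(u\<^sup>2)/6)"
    if u: "0 \<le> u" "u \<le> T" for u
  proof -
    have "cmod (\<integral>\<omega>. iexp (u * (\<Sum>j\<in>J. \<omega> j * x j)) \<partial>PiM J (\<lambda>_. \<mu>)) = (\<Prod>j\<in>J. cmod (char \<mu> (u * x j)))"
      unfolding char_prod[OF J] by (rule prod_norm[symmetric])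
    also have "\<dots> \<le> (\<Prod>j\<in>J. exp (-((u * x j)\<^sup>2)/3))"
    proof (rule prod_mono)
      fix j assume j: "j \<in> J"
      have "\<bar>u * x j\<bar> * M3 = u * \<bar>x j\<bar> * M3" using u by (simp add: abs_mult)
      also have "\<dots> \<le> T * m * M3"
        using u xm[OF j] M3_ge1 by (intro mult_right_mono mult_mono) auto
      also have "T * m * M3 \<le> 1"
        using hpos m unfolding T_def h_def by (simp add: field_simps)
      finally show "0 \<le> cmod (char \<mu> (u * x j)) \<and> cmod (char \<mu> (u * x j)) \<le> exp (-((u * x j)\<^sup>2)/3)"
        using char_bound by auto
    qed
    also have "\<dots> = exp (-(u\<^sup>2) * (\<Sum>j\<in>J. (x j)\<^sup>2) / 3)"
      by (simp add: exp_sum[OF J, symmetric] sum_divide_distrib sum_distrib_left power_mult_distrib)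
    also have "\<dots> \<le> exp (-(u\<^sup>2)/6)"
    proof -
      have "u\<^sup>2 * (1/2) \<le> u\<^sup>2 * (\<Sum>j\<in>J. (x j)\<^sup>2)" using xs by (intro mult_left_mono) auto
      then show ?thesis by simp
    qed
    finally show ?thesis .
  qed
  have "measure (PiM J (\<lambda>_. \<mu>)) {\<omega>\<in>space (PiM J (\<lambda>_. \<mu>)). \<bar>\<Sum>j\<in>J. \<omega> j * x j\<bar> \<le> s}
      \<le> measure (PiM J (\<lambda>_. \<mu>)) {\<omega>\<in>space (PiM J (\<lambda>_. \<mu>)). \<bar>\<Sum>j\<in>J. \<omega> j * x j\<bar> \<le> 1/T}"
    by (rule P.finite_measure_mono) (auto simp: T_def h_def)
  also have "\<dots> \<le> 4 * exp (3/2) / T"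
    by (rule esseen[OF P.prob_space_axioms R_meas T bnd])
  also have "\<dots> = 4 * exp (3/2) * h" by (simp add: T_def)
  also have "\<dots> \<le> 4 * exp (3/2) * (s + M3 * m)"
    using s M3_ge1 m by (auto simp: h_def intro!: mult_left_mono)
  finally show ?thesis .
qed

lemma sgn0_meas[measurable]: "sgn0 \<in> borel_measurable borel"
  unfolding sgn0_def[abs_def] by measurable

lemma sgn0_diff: "\<bar>(sgn0 (z + r) - sgn0 r) * y\<bar> \<le> (if \<bar>r\<bar> \<le> \<bar>z\<bar> then 2 * \<bar>y\<bar> else 0)"
  by (auto simp: sgn0_def abs_mult)

lemma coord:
  assumes i: "i < n" and m: "m > 0" and xm: "\<And>j. j < n \<Longrightarrow> \<bar>x j\<bar> \<le> m"
    and mh: "m\<^sup>2 \<le> 1/2" and xs: "(\<Sum>j<n. (x j)\<^sup>2) = 1"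
  shows "\<bar>v_vec \<mu> n x i\<bar> \<le> 8 * exp (3/2) * (m + M3 * m)"
proof -
  define K where "K = 4 * exp (3/2 :: real)"
  have K0: "K \<ge> 0" by (simp add: K_def)
  interpret PP: product_prob_space "\<lambda>_. \<mu>" by unfold_locales
  define J where "J = {..<n} - {i}"
  have J: "finite J" "i \<notin> J" and iJ: "insert i J = {..<n}" using i by (auto simp: J_def)
  interpret PJ: prob_space "PiM J (\<lambda>_. \<mu>)" using rd by (auto intro!: prob_space_PiM simp: real_distribution_def)
  interpret Q: pair_sigma_finite "PiM J (\<lambda>_. \<mu>)" \<mu> ..
  define R where "R \<omega> = (\<Sum>j\<in>J. \<omega> j * x j)" for \<omega> :: "nat \<Rightarrow> real"
  have Rm[measurable]: "R \<in> borel_measurable (PiM J (\<lambda>_. \<mu>))" unfolding R_def by measurable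
  define f where "f \<omega> = sgn0 (\<Sum>j<n. \<omega> j * x j) * \<omega> i" for \<omega> :: "nat \<Rightarrow> real"
  have fint: "integrable (PiM (insert i J) (\<lambda>_. \<mu>)) f"
  proof (rule Bochner_Integration.integrable_bound[where f="\<lambda>\<omega>. \<bar>\<omega> i\<bar>"])
    have "integrable (distr (PiM (insert i J) (\<lambda>_. \<mu>)) \<mu> (\<lambda>\<omega>. \<omega> i)) abs"
    proof -
      have "distr (PiM (insert i J) (\<lambda>_. \<mu>)) \<mu> (\<lambda>\<omega>. \<omega> i) = \<mu>"
        using distr_PiM_component[of "insert i J" "\<lambda>_. \<mu>" i] rd by (simp add: real_distribution_def)
      then show ?thesis using ia by simp
    qed
    then show "integrable (PiM (insert i J) (\<lambda>_. \<mu>)) (\<lambda>\<omega>. \<bar>\<omega> i\<bar>)"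
      by (subst (asm) integrable_distr_eq) auto
    show "AE \<omega> in PiM (insert i J) (\<lambda>_. \<mu>). norm (f \<omega>) \<le> norm \<bar>\<omega> i\<bar>"
      by (rule AE_I2) (auto simp: f_def sgn0_def abs_mult)
  qed (unfold f_def iJ, measurable, use i in simp)
  have "v_vec \<mu> n x i = (\<integral>\<omega>. f \<omega> \<partial>PiM (insert i J) (\<lambda>_. \<mu>))"
    unfolding v_vec_def f_def iJ ..
  also have "\<dots> = (\<integral>z. (\<integral>y. f (z(i := y)) \<partial>\<mu>) \<partial>PiM J (\<lambda>_. \<mu>))"
    by (rule PP.product_integral_insert[OF J fint])
  also have "\<dots> = (\<integral>z. (\<integral>y. sgn0 (y * x i + R z) * y \<partial>\<mu>) \<partial>PiM J (\<lambda>_. \<mu>))"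
  proof (rule Bochner_Integration.integral_cong[OF refl], rule Bochner_Integration.integral_cong[OF refl])
    fix z y
    have "(\<Sum>j<n. (z(i := y)) j * x j) = (\<Sum>j\<in>insert i J. (z(i := y)) j * x j)" by (simp add: iJ)
    also have "\<dots> = y * x i + R z"
      using J by (auto simp: R_def intro!: sum.cong)
    finally show "f (z(i := y)) = sgn0 (y * x i + R z) * y" by (simp add: f_def)
  qed
  finally have v: "v_vec \<mu> n x i = (\<integral>z. (\<integral>y. sgn0 (y * x i + R z) * y \<partial>\<mu>) \<partial>PiM J (\<lambda>_. \<mu>))" .
  define G where "G \<omega> = (\<integral>y. sgn0 (y * x i + R \<omega>) * y \<partial>\<mu>)" for \<omega>
  define H where "H \<omega> y = (if \<bar>R \<omega>\<bar> \<le> \<bar>y\<bar> * \<bar>x i\<bar> then ennreal (2 * \<bar>y\<bar>) else 0)" for \<omega> y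
  have Gb: "ennreal \<bar>G \<omega>\<bar> \<le> (\<integral>\<^sup>+y. H \<omega> y \<partial>\<mu>)" for \<omega>
  proof -
    have int1: "integrable \<mu> (\<lambda>y. sgn0 (y * x i + R \<omega>) * y)"
      by (rule Bochner_Integration.integrable_bound[OF ia]) (auto simp: sgn0_def abs_mult)
    have "G \<omega> = (\<integral>y. sgn0 (y * x i + R \<omega>) * y - sgn0 (R \<omega>) * y \<partial>\<mu>)"
      unfolding G_def using int1 i1 e1 by simp
    also have "\<dots> = (\<integral>y. (sgn0 (y * x i + R \<omega>) - sgn0 (R \<omega>)) * y \<partial>\<mu>)"
      by (simp add: left_diff_distrib)
    finally have "ennreal \<bar>G \<omega>\<bar> = ennreal (norm (\<integral>y. (sgn0 (y * x i + R \<omega>) - sgn0 (R \<omega>)) * y \<partial>\<mu>))"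
      by simp
    also have "\<dots> \<le> (\<integral>\<^sup>+y. norm ((sgn0 (y * x i + R \<omega>) - sgn0 (R \<omega>)) * y) \<partial>\<mu>)"
      by (rule integral_norm_bound_ennreal) (use int1 i1 in \<open>auto simp: left_diff_distrib\<close>)
    also have "\<dots> \<le> (\<integral>\<^sup>+y. H \<omega> y \<partial>\<mu>)"
    proof (rule nn_integral_mono)
      fix y
      have "\<bar>(sgn0 (y * x i + R \<omega>) - sgn0 (R \<omega>)) * y\<bar> \<le> (if \<bar>R \<omega>\<bar> \<le> \<bar>y * x i\<bar> then 2 * \<bar>y\<bar> else 0)"
        by (rule sgn0_diff)
      then show "ennreal (norm ((sgn0 (y * x i + R \<omega>) - sgn0 (R \<omega>)) * y)) \<le> H \<omega> y"
        unfolding H_def real_norm_def abs_mult[of y "x i"] by (cases "\<bar>R \<omega>\<bar> \<le> \<bar>y\<bar> * \<bar>x i\<bar>") auto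
    qed
    finally show ?thesis .
  qed
  have Hm: "case_prod H \<in> borel_measurable (PiM J (\<lambda>_. \<mu>) \<Otimes>\<^sub>M \<mu>)"
    unfolding H_def by measurable
  have sJ: "(\<Sum>j\<in>J. (x j)\<^sup>2) \<ge> 1/2"
  proof -
    have "1 = (\<Sum>j\<in>insert i J. (x j)\<^sup>2)" using xs iJ by simp
    also have "\<dots> = (x i)\<^sup>2 + (\<Sum>j\<in>J. (x j)\<^sup>2)" using J by simp
    also have "(x i)\<^sup>2 \<le> m\<^sup>2" using xm[OF i] m by (metis abs_le_square_iff abs_of_pos)
    finally show ?thesis using mh by simp
  qed
  have inner: "(\<integral>\<^sup>+\<omega>. H \<omega> y \<partial>PiM J (\<lambda>_. \<mu>)) \<le> ennreal (2 * \<bar>y\<bar> * (K * (\<bar>y\<bar> * \<bar>x i\<bar> + M3 * m)))" for y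
  proof -
    define A where "A = {\<omega>\<in>space (PiM J (\<lambda>_. \<mu>)). \<bar>R \<omega>\<bar> \<le> \<bar>y\<bar> * \<bar>x i\<bar>}"
    have A: "A \<in> sets (PiM J (\<lambda>_. \<mu>))" unfolding A_def by measurable
    have "(\<integral>\<^sup>+\<omega>. H \<omega> y \<partial>PiM J (\<lambda>_. \<mu>)) = (\<integral>\<^sup>+\<omega>. ennreal (2 * \<bar>y\<bar>) * indicator A \<omega> \<partial>PiM J (\<lambda>_. \<mu>))"
      by (rule nn_integral_cong) (auto simp: H_def A_def)
    also have "\<dots> = ennreal (2 * \<bar>y\<bar>) * emeasure (PiM J (\<lambda>_. \<mu>)) A"
      by (rule nn_integral_cmult_indicator[OF A])
    also have "emeasure (PiM J (\<lambda>_. \<mu>)) A = ennreal (measure (PiM J (\<lambda>_. \<mu>)) A)"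
      by (simp add: PJ.emeasure_eq_measure)
    also have "ennreal (2 * \<bar>y\<bar>) * ennreal (measure (PiM J (\<lambda>_. \<mu>)) A) \<le> ennreal (2 * \<bar>y\<bar>) * ennreal (K * (\<bar>y\<bar> * \<bar>x i\<bar> + M3 * m))"
    proof -
      have "measure (PiM J (\<lambda>_. \<mu>)) A \<le> K * (\<bar>y\<bar> * \<bar>x i\<bar> + M3 * m)"
        unfolding A_def R_def K_def
        by (rule anti[OF J(1) m _ sJ]) (use xm J_def in auto)
      then show ?thesis by (intro mult_left_mono ennreal_leI) auto
    qed
    also have "\<dots> = ennreal (2 * \<bar>y\<bar> * (K * (\<bar>y\<bar> * \<bar>x i\<bar> + M3 * m)))"
      by (rule ennreal_mult[symmetric]) (use K0 M3_ge1 m in auto)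
    finally show ?thesis .
  qed
  have "ennreal \<bar>v_vec \<mu> n x i\<bar> \<le> (\<integral>\<^sup>+\<omega>. ennreal \<bar>G \<omega>\<bar> \<partial>PiM J (\<lambda>_. \<mu>))"
  proof (cases "integrable (PiM J (\<lambda>_. \<mu>)) G")
    case True
    then show ?thesis unfolding v G_def[symmetric] using integral_norm_bound_ennreal[OF True] by simp
  next
    case False
    then show ?thesis unfolding v G_def[symmetric] by (simp add: not_integrable_integral_eq)
  qed
  also have "\<dots> \<le> (\<integral>\<^sup>+\<omega>. (\<integral>\<^sup>+y. H \<omega> y \<partial>\<mu>) \<partial>PiM J (\<lambda>_. \<mu>))"
    by (rule nn_integral_mono) (rule Gb)
  also have "\<dots> = (\<integral>\<^sup>+y. (\<integral>\<^sup>+\<omega>. H \<omega> y \<partial>PiM J (\<lambda>_. \<mu>)) \<partial>\<mu>)"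
    by (rule Q.Fubini'[OF Hm, symmetric])
  also have "\<dots> \<le> (\<integral>\<^sup>+y. ennreal (2 * \<bar>y\<bar> * (K * (\<bar>y\<bar> * \<bar>x i\<bar> + M3 * m))) \<partial>\<mu>)"
    by (rule nn_integral_mono) (rule inner)
  also have "\<dots> = ennreal (\<integral>y. 2 * \<bar>y\<bar> * (K * (\<bar>y\<bar> * \<bar>x i\<bar> + M3 * m)) \<partial>\<mu>)"
  proof (rule nn_integral_eq_integral)
    have "integrable \<mu> (\<lambda>y. 2 * K * \<bar>x i\<bar> * y\<^sup>2 + 2 * K * M3 * m * \<bar>y\<bar>)"
      using i2 ia by auto
    then show "integrable \<mu> (\<lambda>y. 2 * \<bar>y\<bar> * (K * (\<bar>y\<bar> * \<bar>x i\<bar> + M3 * m)))"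
      by (rule back_subst[where P="integrable \<mu>"]) (auto simp: algebra_simps power2_eq_square abs_mult_self)
    show "AE y in \<mu>. 0 \<le> 2 * \<bar>y\<bar> * (K * (\<bar>y\<bar> * \<bar>x i\<bar> + M3 * m))"
      using K0 M3_ge1 m by (auto intro!: AE_I2)
  qed
  also have "(\<integral>y. 2 * \<bar>y\<bar> * (K * (\<bar>y\<bar> * \<bar>x i\<bar> + M3 * m)) \<partial>\<mu>)
      = 2 * K * \<bar>x i\<bar> * (\<integral>y. y\<^sup>2 \<partial>\<mu>) + 2 * K * M3 * m * (\<integral>y. \<bar>y\<bar> \<partial>\<mu>)"
  proof -
    have "(\<integral>y. 2 * \<bar>y\<bar> * (K * (\<bar>y\<bar> * \<bar>x i\<bar> + M3 * m)) \<partial>\<mu>)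
        = (\<integral>y. 2 * K * \<bar>x i\<bar> * y\<^sup>2 + 2 * K * M3 * m * \<bar>y\<bar> \<partial>\<mu>)"
      by (rule Bochner_Integration.integral_cong) (auto simp: algebra_simps power2_eq_square abs_mult_self)
    also have "\<dots> = 2 * K * \<bar>x i\<bar> * (\<integral>y. y\<^sup>2 \<partial>\<mu>) + 2 * K * M3 * m * (\<integral>y. \<bar>y\<bar> \<partial>\<mu>)"
      using i2 ia by simp
    finally show ?thesis .
  qed
  also have "\<dots> \<le> 2 * K * m + 2 * K * M3 * m"
  proof -
    have "2 * K * \<bar>x i\<bar> * (\<integral>y. y\<^sup>2 \<partial>\<mu>) \<le> 2 * K * m"
      using e2 xm[OF i] K0 by (simp add: mult_left_mono)
    moreover have "2 * K * M3 * m * (\<integral>y. \<bar>y\<bar> \<partial>\<mu>) \<le> 2 * K * M3 * m"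
      using Ea K0 M3_ge1 m by (intro mult_left_le) auto
    ultimately show ?thesis by linarith
  qed
  also have "2 * K * m + 2 * K * M3 * m = 8 * exp (3/2) * (m + M3 * m)"
    by (simp add: K_def algebra_simps)
  finally have "ennreal \<bar>v_vec \<mu> n x i\<bar> \<le> ennreal (8 * exp (3/2) * (m + M3 * m))"
    using ennreal_leI by blast
  then show ?thesis
    by (subst (asm) ennreal_le_iff) (use M3_ge1 m in \<open>auto intro!: mult_nonneg_nonneg\<close>)
qed

end

lemma sup_norm_ge: "j < n \<Longrightarrow> \<bar>y j\<bar> \<le> sup_norm n y"
  unfolding sup_norm_def by (rule Max_ge) auto

theorem lemma4p5:
  shows "\<exists>c>0. \<exists>C>0. \<forall>(n::nat) (\<mu>::real measure) (x::nat \<Rightarrow> real).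
     prob_space \<mu> \<longrightarrow> sets \<mu> = sets borel \<longrightarrow>
     symmetric_distr \<mu> \<longrightarrow> subgaussian_distr \<mu> \<longrightarrow>
     integrable \<mu> (\<lambda>t. t\<^sup>2) \<longrightarrow> (\<integral>t. t\<^sup>2 \<partial>\<mu>) = 1 \<longrightarrow>
     (\<Sum>j<n. (x j)\<^sup>2) = 1 \<longrightarrow>
     sup_norm n x \<le> c / (\<integral>t. \<bar>t\<bar> ^ 3 \<partial>\<mu>) \<longrightarrow>
     sup_norm n (v_vec \<mu> n x) \<le> C * (\<integral>t. \<bar>t\<bar> ^ 3 \<partial>\<mu>) * sup_norm n x"
proof (rule exI[of _ "1/2"], rule conjI, simp, rule exI[of _ "16 * exp (3/2)"], rule conjI, simp, intro allI impI)
  fix n :: nat and \<mu> :: "real measure" and x :: "nat \<Rightarrow> real"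
  assume ps: "prob_space \<mu>" and sb: "sets \<mu> = sets borel" and sy: "symmetric_distr \<mu>"
    and sg: "subgaussian_distr \<mu>"
    and i2: "integrable \<mu> (\<lambda>t. t\<^sup>2)" and e2: "(\<integral>t. t\<^sup>2 \<partial>\<mu>) = 1"
    and xs: "(\<Sum>j<n. (x j)\<^sup>2) = 1"
    and sn: "sup_norm n x \<le> (1/2) / (\<integral>t. \<bar>t\<bar> ^ 3 \<partial>\<mu>)"
  define m where "m = sup_norm n x"
  have xm: "\<And>j. j < n \<Longrightarrow> \<bar>x j\<bar> \<le> m" unfolding m_def by (rule sup_norm_ge)
  have mpos: "m > 0"
  proof (rule ccontr)
    assume "\<not> m > 0"
    then have "\<And>j. j < n \<Longrightarrow> x j = 0" using xm by (metis abs_le_zero_iff not_less order.trans abs_ge_zero)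
    then have "(\<Sum>j<n. (x j)\<^sup>2) = 0" by simp
    then show False using xs by simp
  qed
  have i3: "integrable \<mu> (\<lambda>t. \<bar>t\<bar> ^ 3)"
  proof (rule ccontr)
    assume "\<not> ?thesis"
    then have "(\<integral>t. \<bar>t\<bar> ^ 3 \<partial>\<mu>) = 0" by (rule not_integrable_integral_eq)
    then show False using sn mpos m_def by simp
  qed
  interpret M: prob_space \<mu> by (rule ps)
  have rd: "real_distribution \<mu>"
    unfolding real_distribution_def real_distribution_axioms_def using ps sb by auto
  have i1: "integrable \<mu> (\<lambda>t. t)"
  proof (rule Bochner_Integration.integrable_bound[where f="\<lambda>t. 1 + t\<^sup>2"])
    show "integrable \<mu> (\<lambda>t. 1 + t\<^sup>2)" using i2 by (intro Bochner_Integration.integrable_add) auto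
    show "AE x in \<mu>. norm x \<le> norm (1 + x\<^sup>2)"
    proof (rule AE_I2)
      fix x :: real
      have "\<bar>x\<bar> \<le> 1 + x\<^sup>2"
        using sum_power2_ge_zero[of "\<bar>x\<bar> - 1" 0] by (simp add: power2_eq_square field_simps)
      then show "norm x \<le> norm (1 + x\<^sup>2)" by simp
    qed
  qed (use sb in simp)
  have e1: "(\<integral>t. t \<partial>\<mu>) = 0"
  proof -
    have "(\<integral>t. t \<partial>\<mu>) = (\<integral>t. t \<partial>distr \<mu> borel uminus)"
      using sy unfolding symmetric_distr_def by simp
    also have "\<dots> = (\<integral>t. - t \<partial>\<mu>)"
      by (rule integral_distr) (use sb in auto)
    also have "\<dots> = - (\<integral>t. t \<partial>\<mu>)" by simp
    finally show ?thesis by simp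
  qed
  interpret S: setting \<mu> by (rule setting.intro[OF rd i2 e2 e1 i3])
  have M3: "S.M3 = (\<integral>t. \<bar>t\<bar> ^ 3 \<partial>\<mu>)" by (simp add: S.M3_def)
  have "m \<le> (1/2) / S.M3" using sn M3 m_def by simp
  also have "\<dots> \<le> 1/2" using S.M3_ge1 by (simp add: field_simps)
  finally have mh: "m \<le> 1/2" .
  have mh2: "m\<^sup>2 \<le> 1/2"
  proof -
    have "m\<^sup>2 \<le> (1/2)\<^sup>2" using mh mpos by (intro power_mono) auto
    then show ?thesis by (simp add: power2_eq_square)
  qed
  have n0: "n > 0" using xs by (cases n) auto
  have "sup_norm n (v_vec \<mu> n x) \<le> 8 * exp (3/2) * (m + S.M3 * m)"
    unfolding sup_norm_def
  proof (subst Max_le_iff)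
    show "\<forall>a\<in>(\<lambda>i. \<bar>v_vec \<mu> n x i\<bar>) ` {..<n}. a \<le> 8 * exp (3/2) * (m + S.M3 * m)"
      using S.coord[OF _ mpos xm mh2 xs] by auto
  qed (use n0 in auto)
  also have "\<dots> \<le> 16 * exp (3/2) * S.M3 * m"
  proof -
    have "m \<le> S.M3 * m" using S.M3_ge1 mpos by simp
    then have "8 * exp (3/2) * m \<le> 8 * exp (3/2) * (S.M3 * m)" by (intro mult_left_mono) auto
    then show ?thesis by (simp add: algebra_simps)
  qed
  finally show "sup_norm n (v_vec \<mu> n x) \<le> 16 * exp (3/2) * (\<integral>t. \<bar>t\<bar> ^ 3 \<partial>\<mu>) * sup_norm n x"
    using M3 m_def by simp
qed

end
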